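(* Let $p$ be a prime number of the form $p = 9a^2 + 4b^2$ with integers $a, b$. Then the equation $p x^4 - 36 y^4 = z^2$ has no rational solutions $(x,y,z)$ other than the trivial solution $x=y=z=0$. *)

theory Defs
  imports Complex_Main "HOL-Computational_Algebra.Primes"
begin

end

theory Submission
  imports Defs "HOL-Computational_Algebra.Nth_Powers"
begin

lemma sq_mod4: "(x::int)^2 mod 4 = 0 \<or> x^2 mod 4 = 1"
proof -
  have "x mod 4 \<in> {0,1,2,3}" by auto
  moreover have "x^2 mod 4 = ((x mod 4)^2) mod 4" by (simp add: power_mod)
  ultimately show ?thesis by auto
qed

lemma sq_mod3: "(x::int)^2 mod 3 = 0 \<or> x^2 mod 3 = 1"
proof -
  have "x mod 3 \<in> {0,1,2}" by auto
  moreover have "x^2 mod 3 = ((x mod 3)^2) mod 3" by (simp add: power_mod)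
  ultimately show ?thesis by auto
qed

lemma sq_mod3_nd: "\<not> 3 dvd (x::int) \<Longrightarrow> x^2 mod 3 = 1"
proof -
  assume "\<not> 3 dvd x"
  hence "x mod 3 \<in> {1,2}" by (auto simp: dvd_eq_mod_eq_0)
  moreover have "x^2 mod 3 = ((x mod 3)^2) mod 3" by (simp add: power_mod)
  ultimately show ?thesis by auto
qed

lemma odd_sq_mod4: "odd (x::int) \<Longrightarrow> x^2 mod 4 = 1"
proof -
  assume "odd x"
  hence "x mod 4 \<in> {1,3}" by (simp add: even_iff_mod_2_eq_zero) presburger
  moreover have "x^2 mod 4 = ((x mod 4)^2) mod 4" by (simp add: power_mod)
  ultimately show ?thesis by auto
qed

lemma rat_sq_int:
  fixes w :: rat and N :: int
  assumes "w^2 = of_int N"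
  shows "\<exists>Z::int. w = of_int Z"
proof -
  obtain n d where q: "quotient_of w = (n, d)" by (cases "quotient_of w")
  have d0: "d > 0" using q quotient_of_denom_pos by blast
  have cop: "coprime n d" using q quotient_of_coprime by blast
  have wq: "w = of_int n / of_int d" using q quotient_of_div by blast
  have "(of_int n / of_int d :: rat)^2 = of_int N" using assms wq by simp
  hence "(of_int (n^2) :: rat) = of_int (N * d^2)" using d0 by (simp add: field_simps power_divide)
  hence e: "n^2 = N * d^2" by (simp only: of_int_eq_iff)
  have "d dvd n^2" using e by simp
  moreover have "coprime d (n^2)" using cop by (simp add: coprime_commute)
  ultimately have "is_unit d" by (metis coprime_absorb_left)
  hence "d = 1" using d0 by simp
  thus ?thesis using wq by auto
qed

lemma core:
  fixes P a b X Y s t :: int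
  assumes pr: "prime P" and Pd: "P = 9*a^2 + 4*b^2" and oa: "odd a" and b3: "\<not> 3 dvd b"
    and oX: "odd X" and X3: "\<not> 3 dvd X" and cXY: "coprime X Y"
    and td: "t = 6*Y^2" and eq: "s^2 + t^2 = P*X^4"
    and dv: "P dvd (t*(3*a) - s*(2*b))"
  shows False
proof -
  define c where "c = 3*a"
  define d where "d = 2*b"
  have cd: "c^2 + d^2 = P" unfolding c_def d_def Pd by (simp add: power_mult_distrib)
  have P0: "P \<noteq> 0" using pr by auto
  have id1: "(s*c+t*d)^2 + (t*c - s*d)^2 = P^2 * X^4"
  proof -
    have "(s*c+t*d)^2 + (t*c - s*d)^2 = (s^2+t^2)*(c^2+d^2)" by algebra
    also have "\<dots> = P^2*X^4" using eq cd by (simp add: power2_eq_square)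
    finally show ?thesis .
  qed
  have dv1: "P dvd (t*c - s*d)" using dv unfolding c_def d_def by simp
  have "P dvd (t*c - s*d)^2" using dv1 by (simp add: power2_eq_square)
  moreover have "(s*c+t*d)^2 = P*(P*X^4) - (t*c - s*d)^2" using id1 by (simp add: power2_eq_square eq_diff_eq)
  ultimately have "P dvd (s*c+t*d)^2" by (metis dvd_diff dvd_triv_left)
  hence dv2: "P dvd (s*c+t*d)" using pr prime_dvd_power by blast
  obtain s' where s': "s*c+t*d = P*s'" using dv2 by blast
  obtain t' where t': "t*c - s*d = P*t'" using dv1 by blast
  have "P^2 * (s'^2 + t'^2) = P^2 * X^4" using id1 s' t' by (simp add: power_mult_distrib algebra_simps)
  hence st: "s'^2 + t'^2 = X^4" using P0 by simp
  have "P * t = P * (d*s' + c*t')"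
  proof -
    have "P*(d*s' + c*t') = d*(s*c+t*d) + c*(t*c - s*d)" using s' t' by (simp add: algebra_simps)
    also have "\<dots> = t*(c^2+d^2)" by (simp add: algebra_simps power2_eq_square)
    finally have "P*(d*s' + c*t') = t*P" using cd by simp
    thus ?thesis by (simp add: mult.commute) (metis)
  qed
  hence tt: "t = 2*b*s' + 3*a*t'" using P0 unfolding c_def d_def by simp
  have "even t" using td by simp
  moreover have "3*a*t' = t - 2*(b*s')" using tt by simp
  ultimately have "even (3*a*t')" by simp
  hence et': "even t'" using oa by simp
  have "3 dvd t" using td by simp
  moreover have "2*b*s' = t - 3*(a*t')" using tt by simp
  ultimately have "3 dvd 2*b*s'" by (metis dvd_diff dvd_triv_left)
  hence "3 dvd 2*(b*s')" by (simp add: mult.assoc)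
  hence "3 dvd b*s'" using prime_dvd_mult_iff[of "3::int" 2 "b*s'"] by auto
  hence s3: "3 dvd s'" using b3 prime_dvd_mult_iff[of "3::int" b s'] by auto
  define W where "W = X^2"
  have WW: "s'^2 + t'^2 = W^2" using st unfolding W_def by simp
  have Wpos: "W > 0" unfolding W_def using oX by (metis even_zero zero_less_power2)

  have X0: "X \<noteq> 0" using oX by auto
  have oW: "odd W" unfolding W_def using oX by simp
  have os': "odd s'"
  proof
    assume "even s'"
    hence "even (s'^2 + t'^2)" using et' by simp
    thus False using WW oW by simp
  qed
  have c2: "coprime X 2" using oX by (simp add: coprime_commute)
  have c3: "coprime X 3" using X3 prime_imp_coprime[of "3::int" X] by (simp add: coprime_commute)
  have cY: "coprime X (Y^2)" using cXY by simp
  have "coprime X (2*3)" using c2 c3 by (simp only: coprime_mult_right_iff)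
  hence "coprime X 6" by simp
  hence cXt: "coprime X t" unfolding td using cY by simp
  have cX4t: "coprime (X^4) t" using cXt by simp
  have cst: "coprime s' t'"
  proof (rule coprimeI)
    fix e assume e1: "e dvd s'" and e2: "e dvd t'"
    have "e dvd s'^2 + t'^2" using e1 e2 by (simp add: power2_eq_square)
    hence "e dvd X^4" using st by simp
    moreover have "e dvd t" using tt e1 e2 by simp
    ultimately show "is_unit e" using cX4t coprime_common_divisor by blast
  qed
  have cst2: "coprime s' (t'^2)" using cst by simp
  have "coprime s' (W^2)"
  proof (rule coprimeI)
    fix e assume e1: "e dvd s'" and e2: "e dvd W^2"
    have "e dvd W^2 - s'*s'" using e1 e2 by simp
    moreover have "W^2 - s'*s' = t'^2" using WW by (simp add: power2_eq_square algebra_simps)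
    ultimately have "e dvd t'^2" by simp
    with e1 show "is_unit e" by (rule coprime_common_divisor[OF cst2])
  qed
  hence cWs: "coprime W s'" by (simp add: coprime_commute)
  have ev1: "even (W + s')" using oW os' by simp
  have ev2: "even (W - s')" using oW os' by simp
  define u1 where "u1 = (W + s') div 2"
  define u2 where "u2 = (W - s') div 2"
  have u1e: "2*u1 = W + s'" unfolding u1_def using ev1 by simp
  have u2e: "2*u2 = W - s'" unfolding u2_def using ev2 by simp
  have cu: "coprime u1 u2"
  proof (rule coprimeI)
    fix e assume e1: "e dvd u1" and e2: "e dvd u2"
    have "e dvd u1 + u2" using e1 e2 by simp
    moreover have "u1 + u2 = W" using u1e u2e by simp
    ultimately have "e dvd W" by simp
    moreover have "e dvd u1 - u2" using e1 e2 by simp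
    moreover have "u1 - u2 = s'" using u1e u2e by simp
    ultimately have "e dvd s'" by simp
    with \<open>e dvd W\<close> show "is_unit e" by (rule coprime_common_divisor[OF cWs])
  qed
  obtain k where k: "t' = 2*k" using et' by blast
  have "4*(u1*u2) = (2*u1)*(2*u2)" by simp
  also have "\<dots> = (W+s')*(W-s')" using u1e u2e by simp
  also have "\<dots> = W^2 - s'^2" by (simp add: power2_eq_square algebra_simps)
  finally have "4*(u1*u2) = W^2 - s'^2" .
  hence "4*(u1*u2) = 4*k^2" using WW k by (simp add: power_mult_distrib)
  hence uk: "u1*u2 = k^2" by simp
  have ne: "s'^2 \<noteq> W^2"
  proof
    assume "s'^2 = W^2"
    hence "s'^2 = X^4" unfolding W_def by simp
    moreover have "3 dvd s'^2" using s3 by (simp add: power2_eq_square)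
    ultimately have "3 dvd X^4" by simp
    hence "3 dvd X" using prime_dvd_power[of "3::int" X 4] by simp
    thus False using X3 by simp
  qed
  have "0 \<le> t'^2" by simp
  hence "s'^2 \<le> W^2" using WW by linarith
  hence "s'^2 < W^2" using ne by simp
  hence "\<bar>s'\<bar>^2 < W^2" by simp
  hence "\<bar>s'\<bar> < W" using Wpos power2_less_imp_less[of "\<bar>s'\<bar>" W] by simp
  hence u1p: "u1 > 0" and u2p: "u2 > 0" using u1e u2e by auto
  have "coprime (int (nat u1)) (int (nat u2))" using cu u1p u2p by simp
  hence "coprime (nat u1) (nat u2)" by (simp only: coprime_int_iff)
  moreover have "nat u1 * nat u2 = (nat \<bar>k\<bar>)^2"
  proof -
    have "nat u1 * nat u2 = nat (u1*u2)" using u1p by (simp add: nat_mult_distrib)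
    also have "\<dots> = nat (\<bar>k\<bar>^2)" using uk by simp
    also have "\<dots> = (nat \<bar>k\<bar>)^2" using nat_power_eq[of "\<bar>k\<bar>" 2] by simp
    finally show ?thesis .
  qed
  ultimately have "is_nth_power 2 (nat u1)" using u1p u2p is_nth_power_mult_coprime_natD(1)[of "nat u1" "nat u2" 2] by auto
  then obtain m where "nat u1 = m^2" by (auto elim: is_nth_powerE)
  hence "int (nat u1) = int (m^2)" by simp
  hence um: "u1 = (int m)^2" using u1p by simp
  have "W mod 3 = 1" unfolding W_def using sq_mod3_nd X3 by simp
  moreover obtain j where "s' = 3*j" using s3 by blast
  ultimately have "(2*u1) mod 3 = 1" using u1e by simp
  moreover have "u1 mod 3 = 0 \<or> u1 mod 3 = 1" using um sq_mod3 by simp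
  ultimately show False by presburger
qed

lemma aux4: "(z::int) + 9*y = 4*m \<Longrightarrow> y mod 4 = 1 \<Longrightarrow> z mod 4 = 3" by presburger
lemma aux3: "(z::int) + 4*y = 9*m \<Longrightarrow> y mod 3 = 1 \<Longrightarrow> z mod 3 = 2" by presburger

lemma int_main:
  fixes p :: nat and a b X Y Z :: int
  assumes pp: "prime p" and pd: "int p = 9*a^2 + 4*b^2"
    and eq: "int p * X^4 - 36*Y^4 = Z^2" and cXY: "coprime X Y"
  shows False
proof -
  define P where "P = int p"
  have pr: "prime P" unfolding P_def using pp by simp
  have Pd: "P = 9*a^2 + 4*b^2" using pd P_def by simp
  have eqP: "P * X^4 - 36*Y^4 = Z^2" using eq P_def by simp
  have oa: "odd a"
  proof
    assume "even a"
    then obtain k where "a = 2*k" by blast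
    hence "P = 4*(9*k^2 + b^2)" using Pd by (simp add: power_mult_distrib)
    hence "(4::int) dvd int p" unfolding P_def by simp
    hence d4: "(4::nat) dvd p" using int_dvd_int_iff[of 4 p] by simp
    have "(2::nat) dvd 4" by simp
    hence "(2::nat) dvd p" using d4 by (rule dvd_trans)
    hence "p = 2" using primes_dvd_imp_eq[of 2 p] pp by simp
    thus False using d4 by simp
  qed
  have b3: "\<not> 3 dvd b"
  proof
    assume "3 dvd b"
    then obtain k where "b = 3*k" by blast
    hence "P = 9*(a^2 + 4*k^2)" using Pd by (simp add: power_mult_distrib)
    hence "(9::int) dvd int p" unfolding P_def by simp
    hence d9: "(9::nat) dvd p" using int_dvd_int_iff[of 9 p] by simp
    have "(3::nat) dvd 9" by simp
    hence "(3::nat) dvd p" using d9 by (rule dvd_trans)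
    hence "p = 3" using primes_dvd_imp_eq[of 3 p] pp by simp
    thus False using d9 by simp
  qed
  have oX: "odd X"
  proof
    assume "even X"
    then obtain X' where X': "X = 2*X'" by blast
    have oY: "odd Y"
    proof
      assume "even Y"
      hence "(2::int) dvd X" "(2::int) dvd Y" using \<open>even X\<close> by auto
      hence "is_unit (2::int)" using cXY coprime_common_divisor by blast
      thus False by simp
    qed
    have "Z^2 = 2*(8*P*X'^4 - 18*Y^4)" using eqP X' by (simp add: power_mult_distrib algebra_simps)
    hence "even (Z^2)" by simp
    hence "even Z" by simp
    then obtain Z' where Z': "Z = 2*Z'" by blast
    have "4*Z'^2 = 4*(4*P*X'^4 - 9*Y^4)" using eqP X' Z' by (simp add: power_mult_distrib algebra_simps)
    hence e2: "Z'^2 + 9*Y^4 = 4*(P*X'^4)" by simp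
    have "(Y^2)^2 mod 4 = 1" using oY by (intro odd_sq_mod4) simp
    hence "Y^4 mod 4 = 1" by (simp add: power_mult[symmetric])
    hence "Z'^2 mod 4 = 3" using aux4[OF e2] by simp
    thus False using sq_mod4[of Z'] by simp
  qed
  have X3: "\<not> 3 dvd X"
  proof
    assume "3 dvd X"
    then obtain X' where X': "X = 3*X'" by blast
    have nY: "\<not> 3 dvd Y"
    proof
      assume "3 dvd Y"
      hence "is_unit (3::int)" using cXY coprime_common_divisor \<open>3 dvd X\<close> by blast
      thus False by simp
    qed
    have "Z^2 = 3*(27*P*X'^4 - 12*Y^4)" using eqP X' by (simp add: power_mult_distrib algebra_simps)
    hence "3 dvd Z^2" by simp
    hence "3 dvd Z" using prime_dvd_power[of "3::int" Z 2] by simp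
    then obtain Z' where Z': "Z = 3*Z'" by blast
    have "9*Z'^2 = 9*(9*P*X'^4 - 4*Y^4)" using eqP X' Z' by (simp add: power_mult_distrib algebra_simps)
    hence e2: "Z'^2 + 4*Y^4 = 9*(P*X'^4)" by simp
    have y2: "Y^2 mod 3 = 1" using nY sq_mod3_nd by simp
    have "(Y^2)^2 mod 3 = ((Y^2 mod 3)^2) mod 3" by (simp add: power_mod)
    hence "Y^4 mod 3 = 1" using y2 by (simp add: power_mult[symmetric])
    hence "Z'^2 mod 3 = 2" using aux3[OF e2] by simp
    thus False using sq_mod3[of Z'] by simp
  qed
  define t where "t = 6*Y^2"
  have eq2: "Z^2 + t^2 = P*X^4" unfolding t_def using eqP by (simp add: power_mult_distrib algebra_simps)
  have "(t*(3*a) - Z*(2*b)) * (t*(3*a) + Z*(2*b)) = P*t^2 - 4*b^2*(Z^2+t^2)"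
    unfolding Pd by (simp add: power2_eq_square algebra_simps)
  also have "\<dots> = P*(t^2 - 4*b^2*X^4)" using eq2 by (simp add: algebra_simps)
  finally have "P dvd (t*(3*a) - Z*(2*b)) * (t*(3*a) + Z*(2*b))" by simp
  hence "P dvd (t*(3*a) - Z*(2*b)) \<or> P dvd (t*(3*a) + Z*(2*b))" using pr prime_dvd_mult_iff by blast
  thus False
  proof
    assume "P dvd (t*(3*a) - Z*(2*b))"
    thus False using core[OF pr Pd oa b3 oX X3 cXY t_def eq2] by simp
  next
    assume h: "P dvd (t*(3*a) + Z*(2*b))"
    have Pd': "P = 9*a^2 + 4*(-b)^2" using Pd by simp
    have b3': "\<not> 3 dvd (-b)" using b3 by simp
    have "P dvd (t*(3*a) - Z*(2*(-b)))" using h by simp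
    thus False using core[OF pr Pd' oa b3' oX X3 cXY t_def eq2] by simp
  qed
qed

theorem proposition2:
  fixes p :: nat and a b :: int and x y z :: rat
  assumes "prime p"
    and "int p = 9 * a ^ 2 + 4 * b ^ 2"
    and "of_nat p * x ^ 4 - 36 * y ^ 4 = z ^ 2"
  shows "x = 0 \<and> y = 0 \<and> z = 0"
proof -
  have x0: "x = 0"
  proof (rule ccontr)
    assume xn: "x \<noteq> 0"
    obtain n1 d1 where q1: "quotient_of x = (n1, d1)" by (cases "quotient_of x")
    obtain n2 d2 where q2: "quotient_of y = (n2, d2)" by (cases "quotient_of y")
    have d1p: "d1 > 0" using q1 quotient_of_denom_pos by blast
    have d2p: "d2 > 0" using q2 quotient_of_denom_pos by blast
    have x1: "x = of_int n1 / of_int d1" using q1 quotient_of_div by blast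
    have y1: "y = of_int n2 / of_int d2" using q2 quotient_of_div by blast
    define X0 where "X0 = n1*d2"
    define Y0 where "Y0 = n2*d1"
    define D where "D = d1*d2"
    have Dp: "D > 0" unfolding D_def using d1p d2p by simp
    have x2: "x = of_int X0 / of_int D" unfolding X0_def D_def x1 using d2p by simp
    have y2: "y = of_int Y0 / of_int D" unfolding Y0_def D_def y1 using d1p by simp
    have X00: "X0 \<noteq> 0" using xn x2 by auto
    define g where "g = gcd X0 Y0"
    have gp: "g > 0" unfolding g_def using X00 by simp
    define X where "X = X0 div g"
    define Y where "Y = Y0 div g"
    have cXY: "coprime X Y" unfolding X_def Y_def g_def using X00 div_gcd_coprime by blast
    have X0e: "X0 = g*X" unfolding X_def g_def by simp
    have Y0e: "Y0 = g*Y" unfolding Y_def g_def by simp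
    define r :: rat where "r = of_int g / of_int D"
    have r0: "r \<noteq> 0" unfolding r_def using gp Dp by simp
    have x3: "x = of_int X * r" unfolding r_def x2 X0e by simp
    have y3: "y = of_int Y * r" unfolding r_def y2 Y0e by simp
    define N where "N = int p * X^4 - 36*Y^4"
    have "z^2 = r^4 * of_int N" using assms(3) unfolding x3 y3 N_def
      by (simp add: power_mult_distrib algebra_simps)
    hence "(z / r^2)^2 = of_int N" using r0 by (simp add: power_divide field_simps)
    then obtain Z where "z / r^2 = of_int Z" using rat_sq_int by blast
    hence "(of_int (Z^2) :: rat) = of_int N" using \<open>(z / r^2)^2 = of_int N\<close> by simp
    hence "Z^2 = N" by (simp only: of_int_eq_iff)
    hence "int p * X^4 - 36*Y^4 = Z^2" unfolding N_def by simp
    thus False using int_main[OF assms(1) assms(2) _ cXY] by blast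
  qed
  have "- (36 * y^4) = z^2" using assms(3) x0 by simp
  moreover have "0 \<le> z^2" by simp
  moreover have "0 \<le> y^4" by (simp add: zero_le_even_power)
  ultimately have "y^4 = 0" "z^2 = 0" by linarith+
  thus ?thesis using x0 by simp
qed

end
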